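(* Let $n\ge 5$ and let $T(n)$ be the triangular graph. The complement $\overline{T(n)}$ of $T(n)$ is a Neumaier graph if and only if $n$ is even. In this case, if $\overline{T(n)}$ is a (strongly regular) Neumaier graph with parameters $(\binom{n}{2},k,\lambda,\mu;a,c)$, then $n=2a+4$ and $c=a+2$.
   Context: The triangular graph $T(n)$ ($n\ge5$) is the line graph of the complete graph $K_n$: its vertices are the 2-subsets of $\{1,\dots,n\}$, two being adjacent iff they intersect; $T(n)$ and its complement are strongly regular. A graph is edge-regular with parameters $(n,k,\lambda)$ if it has $n$ vertices, is $k$-regular, and any two adjacent vertices have exactly $\lambda$ common neighbours. A clique $C$ is a regular clique with nexus $a$ if every vertex not in $C$ has exactly $a$ neighbours in $C$. A Neumaier graph is a non-complete edge-regular graph containing a regular clique; it has parameters $(n,k,\lambda;a,c)$ if it is edge-regular with parameters $(n,k,\lambda)$ and contains a regular clique of size $c$ with nexus $a$. A strongly regular Neumaier graph with parameters $(n,k,\lambda,\mu;a,c)$ is a strongly regular graph with parameters $(n,k,\lambda,\mu)$ (non-complete, connected, $k$-regular, adjacent vertices having $\lambda$ and non-adjacent vertices having $\mu$ common neighbours) which is a Neumaier graph with parameters $(n,k,\lambda;a,c)$. *)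

theory Defs
  imports Main
begin

text \<open>Simple graphs are given by a vertex set V and a symmetric irreflexive
adjacency relation E (only its restriction to V matters).\<close>

definition nbrs :: "'a set \<Rightarrow> ('a \<Rightarrow> 'a \<Rightarrow> bool) \<Rightarrow> 'a \<Rightarrow> 'a set" where
  "nbrs V E v = {w \<in> V. E v w}"

definition is_graph :: "'a set \<Rightarrow> ('a \<Rightarrow> 'a \<Rightarrow> bool) \<Rightarrow> bool" where
  "is_graph V E \<longleftrightarrow> finite V \<and> (\<forall>v\<in>V. \<not> E v v) \<and> (\<forall>v\<in>V. \<forall>w\<in>V. E v w \<longrightarrow> E w v)"

definition is_complete :: "'a set \<Rightarrow> ('a \<Rightarrow> 'a \<Rightarrow> bool) \<Rightarrow> bool" where
  "is_complete V E \<longleftrightarrow> (\<forall>v\<in>V. \<forall>w\<in>V. v \<noteq> w \<longrightarrow> E v w)"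

definition is_connected :: "'a set \<Rightarrow> ('a \<Rightarrow> 'a \<Rightarrow> bool) \<Rightarrow> bool" where
  "is_connected V E \<longleftrightarrow> (\<forall>v\<in>V. \<forall>w\<in>V. (\<lambda>x y. x \<in> V \<and> y \<in> V \<and> E x y)\<^sup>*\<^sup>* v w)"

definition edge_regular ::
  "'a set \<Rightarrow> ('a \<Rightarrow> 'a \<Rightarrow> bool) \<Rightarrow> nat \<Rightarrow> nat \<Rightarrow> nat \<Rightarrow> bool" where
  "edge_regular V E nv k lam \<longleftrightarrow> is_graph V E \<and> card V = nv \<and>
     (\<forall>v\<in>V. card (nbrs V E v) = k) \<and>
     (\<forall>v\<in>V. \<forall>w\<in>V. E v w \<longrightarrow> card (nbrs V E v \<inter> nbrs V E w) = lam)"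

definition is_clique :: "'a set \<Rightarrow> ('a \<Rightarrow> 'a \<Rightarrow> bool) \<Rightarrow> 'a set \<Rightarrow> bool" where
  "is_clique V E C \<longleftrightarrow> C \<noteq> {} \<and> C \<subseteq> V \<and> (\<forall>v\<in>C. \<forall>w\<in>C. v \<noteq> w \<longrightarrow> E v w)"

definition regular_clique :: "'a set \<Rightarrow> ('a \<Rightarrow> 'a \<Rightarrow> bool) \<Rightarrow> 'a set \<Rightarrow> nat \<Rightarrow> bool" where
  "regular_clique V E C a \<longleftrightarrow> is_clique V E C \<and>
     (\<forall>v\<in>V - C. card (nbrs V E v \<inter> C) = a)"

definition neumaier_graph :: "'a set \<Rightarrow> ('a \<Rightarrow> 'a \<Rightarrow> bool) \<Rightarrow> bool" where
  "neumaier_graph V E \<longleftrightarrow> \<not> is_complete V E \<and>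
     (\<exists>k lam. edge_regular V E (card V) k lam) \<and> (\<exists>C a. regular_clique V E C a)"

definition neumaier_params ::
  "'a set \<Rightarrow> ('a \<Rightarrow> 'a \<Rightarrow> bool) \<Rightarrow> nat \<Rightarrow> nat \<Rightarrow> nat \<Rightarrow> nat \<Rightarrow> nat \<Rightarrow> bool" where
  "neumaier_params V E nv k lam a c \<longleftrightarrow> \<not> is_complete V E \<and> edge_regular V E nv k lam \<and>
     (\<exists>C. regular_clique V E C a \<and> card C = c)"

definition strongly_regular ::
  "'a set \<Rightarrow> ('a \<Rightarrow> 'a \<Rightarrow> bool) \<Rightarrow> nat \<Rightarrow> nat \<Rightarrow> nat \<Rightarrow> nat \<Rightarrow> bool" where
  "strongly_regular V E nv k lam mu \<longleftrightarrow> is_graph V E \<and> card V = nv \<and>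
     \<not> is_complete V E \<and> is_connected V E \<and>
     (\<forall>v\<in>V. card (nbrs V E v) = k) \<and>
     (\<forall>v\<in>V. \<forall>w\<in>V. E v w \<longrightarrow> card (nbrs V E v \<inter> nbrs V E w) = lam) \<and>
     (\<forall>v\<in>V. \<forall>w\<in>V. v \<noteq> w \<longrightarrow> \<not> E v w \<longrightarrow> card (nbrs V E v \<inter> nbrs V E w) = mu)"

definition srg_neumaier_params ::
  "'a set \<Rightarrow> ('a \<Rightarrow> 'a \<Rightarrow> bool) \<Rightarrow> nat \<Rightarrow> nat \<Rightarrow> nat \<Rightarrow> nat \<Rightarrow> nat \<Rightarrow> nat \<Rightarrow> bool" where
  "srg_neumaier_params V E nv k lam mu a c \<longleftrightarrow>
     strongly_regular V E nv k lam mu \<and> neumaier_params V E nv k lam a c"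

definition tri_vertices :: "nat \<Rightarrow> nat set set" where
  "tri_vertices n = {S. S \<subseteq> {1..n} \<and> card S = 2}"

definition tri_adj :: "nat set \<Rightarrow> nat set \<Rightarrow> bool" where
  "tri_adj S T \<longleftrightarrow> S \<noteq> T \<and> S \<inter> T \<noteq> {}"

definition tri_compl_adj :: "nat set \<Rightarrow> nat set \<Rightarrow> bool" where
  "tri_compl_adj S T \<longleftrightarrow> S \<noteq> T \<and> \<not> tri_adj S T"

end

theory Submission
  imports Defs
begin

lemma adj_iff: "tri_compl_adj S T \<longleftrightarrow> S \<noteq> T \<and> S \<inter> T = {}"
  unfolding tri_compl_adj_def tri_adj_def by auto

lemma tv_iff: "T \<in> tri_vertices n \<longleftrightarrow> T \<subseteq> {1..n} \<and> card T = 2"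
  unfolding tri_vertices_def by auto

lemma fin_tv: "finite (tri_vertices n)"
proof -
  have "tri_vertices n \<subseteq> Pow {1..n}" unfolding tri_vertices_def by auto
  then show ?thesis by (rule finite_subset) auto
qed

lemma tvD: "T \<in> tri_vertices n \<Longrightarrow> T \<subseteq> {1..n} \<and> card T = 2 \<and> finite T"
  unfolding tv_iff by (auto intro: finite_subset)

lemma tvC: "C \<subseteq> tri_vertices n \<Longrightarrow> T \<in> C \<Longrightarrow> T \<subseteq> {1..n} \<and> card T = 2 \<and> finite T"
  using tvD by blast

lemma pair_tv: "x \<noteq> y \<Longrightarrow> x \<in> {1..n} \<Longrightarrow> y \<in> {1..n} \<Longrightarrow> {x,y} \<in> tri_vertices n"
  unfolding tv_iff by auto

lemma graph_tv: "is_graph (tri_vertices n) tri_compl_adj"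
  unfolding is_graph_def adj_iff using fin_tv by auto

lemma nbrs_eq:
  assumes "S \<in> tri_vertices n"
  shows "nbrs (tri_vertices n) tri_compl_adj S = {T. T \<subseteq> {1..n} - S \<and> card T = 2}"
proof -
  have "S \<noteq> {}" using assms unfolding tv_iff by auto
  then show ?thesis unfolding nbrs_def adj_iff tv_iff by auto
qed

lemma edge_reg: "edge_regular (tri_vertices n) tri_compl_adj (card (tri_vertices n))
   ((n-2) choose 2) ((n-4) choose 2)"
proof -
  have k: "card (nbrs (tri_vertices n) tri_compl_adj S) = (n-2) choose 2"
    if "S \<in> tri_vertices n" for S
  proof -
    have "card ({1..n} - S) = n - 2" using tvD[OF that]
      by (simp add: card_Diff_subset)
    then show ?thesis using nbrs_eq[OF that] n_subsets[of "{1..n} - S" 2] by simp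
  qed
  have l: "card (nbrs (tri_vertices n) tri_compl_adj S \<inter> nbrs (tri_vertices n) tri_compl_adj T)
      = (n-4) choose 2"
    if "S \<in> tri_vertices n" "T \<in> tri_vertices n" "tri_compl_adj S T" for S T
  proof -
    have e: "nbrs (tri_vertices n) tri_compl_adj S \<inter> nbrs (tri_vertices n) tri_compl_adj T
      = {B. B \<subseteq> {1..n} - (S \<union> T) \<and> card B = 2}"
      using nbrs_eq[OF that(1)] nbrs_eq[OF that(2)] by auto
    have fS: "finite S" "finite T" using that unfolding tv_iff by (auto intro: finite_subset)
    have "card (S \<union> T) = 4" using that fS unfolding tv_iff adj_iff
      by (simp add: card_Un_disjoint)
    moreover have "S \<union> T \<subseteq> {1..n}" using that unfolding tv_iff by auto
    ultimately have "card ({1..n} - (S \<union> T)) = n - 4"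
      using fS by (simp add: card_Diff_subset)
    then show ?thesis using e n_subsets[of "{1..n} - (S \<union> T)" 2] by simp
  qed
  show ?thesis unfolding edge_regular_def using graph_tv k l by blast
qed

lemma clique_disj:
  assumes "is_clique (tri_vertices n) tri_compl_adj C" "S \<in> C" "T \<in> C" "S \<noteq> T"
  shows "S \<inter> T = {}"
  using assms unfolding is_clique_def adj_iff by blast

lemma pm_nexus:
  assumes cl: "is_clique (tri_vertices n) tri_compl_adj C"
    and cov: "\<Union>C = {1..n}"
    and T: "T \<in> tri_vertices n" "T \<notin> C"
  shows "card (nbrs (tri_vertices n) tri_compl_adj T \<inter> C) = card C - 2"
proof -
  have CV: "C \<subseteq> tri_vertices n" using cl unfolding is_clique_def by auto
  have finC: "finite C" using CV fin_tv finite_subset by blast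
  obtain x y where xy: "T = {x,y}" "x \<noteq> y" "x \<in> {1..n}" "y \<in> {1..n}"
    using T(1) unfolding tv_iff card_2_iff by auto
  obtain Sx where Sx: "Sx \<in> C" "x \<in> Sx" using xy cov by blast
  obtain Sy where Sy: "Sy \<in> C" "y \<in> Sy" using xy cov by blast
  have "Sx \<noteq> Sy"
  proof
    assume "Sx = Sy"
    then have "T \<subseteq> Sx" using xy Sx Sy by auto
    moreover have "card Sx = 2" "finite Sx" using tvD[of Sx n] Sx CV by auto
    moreover have "card T = 2" using T unfolding tv_iff by auto
    ultimately have "T = Sx" by (metis card_subset_eq)
    then show False using T Sx by auto
  qed
  have eq: "nbrs (tri_vertices n) tri_compl_adj T \<inter> C = C - {Sx, Sy}"
  proof (rule set_eqI, rule iffI)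
    fix S assume "S \<in> nbrs (tri_vertices n) tri_compl_adj T \<inter> C"
    then show "S \<in> C - {Sx, Sy}" using Sx Sy xy unfolding nbrs_def adj_iff by auto
  next
    fix S assume S: "S \<in> C - {Sx, Sy}"
    have "S \<inter> Sx = {}" "S \<inter> Sy = {}" using clique_disj[OF cl] S Sx Sy by auto
    then have "S \<inter> T = {}" using Sx Sy xy by auto
    moreover have "S \<noteq> T" using S T by auto
    ultimately show "S \<in> nbrs (tri_vertices n) tri_compl_adj T \<inter> C"
      using S CV unfolding nbrs_def adj_iff by auto
  qed
  show ?thesis unfolding eq using finC Sx Sy \<open>Sx \<noteq> Sy\<close>
    by (simp add: card_Diff_subset)
qed

lemma cover:
  assumes rc: "regular_clique (tri_vertices n) tri_compl_adj C a" and n5: "n \<ge> 5"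
  shows "\<Union>C = {1..n}"
proof -
  have cl: "is_clique (tri_vertices n) tri_compl_adj C" and
    nex: "\<And>v. v \<in> tri_vertices n - C \<Longrightarrow> card (nbrs (tri_vertices n) tri_compl_adj v \<inter> C) = a"
    using rc unfolding regular_clique_def by auto
  have CV: "C \<subseteq> tri_vertices n" using cl unfolding is_clique_def by auto
  have finC: "finite C" using CV fin_tv finite_subset by blast
  have sub: "\<Union>C \<subseteq> {1..n}" using CV by (auto dest!: tvC[OF CV])
  show ?thesis
  proof (rule ccontr)
    assume "\<Union>C \<noteq> {1..n}"
    then obtain p where p: "p \<in> {1..n}" "p \<notin> \<Union>C" using sub by blast
    obtain S0 where S0: "S0 \<in> C" using cl unfolding is_clique_def by auto
    obtain x y where xy: "S0 = {x,y}" "x \<noteq> y" using tvC[OF CV S0] unfolding card_2_iff by blast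
    have xn: "x \<in> {1..n}" "y \<in> {1..n}" using tvC[OF CV S0] xy by auto
    have px: "p \<noteq> x" using p S0 xy by auto
    have T1: "{p,x} \<in> tri_vertices n - C" using pair_tv[OF px p(1) xn(1)] p by auto
    have "nbrs (tri_vertices n) tri_compl_adj {p,x} \<inter> C = C - {S0}"
    proof (rule set_eqI, rule iffI)
      fix S assume "S \<in> nbrs (tri_vertices n) tri_compl_adj {p,x} \<inter> C"
      then show "S \<in> C - {S0}" using xy unfolding nbrs_def adj_iff by auto
    next
      fix S assume S: "S \<in> C - {S0}"
      have "S \<inter> S0 = {}" using clique_disj[OF cl] S S0 by auto
      then have "S \<inter> {p,x} = {}" using S p xy by auto
      moreover have "S \<noteq> {p,x}" using S T1 by auto
      ultimately show "S \<in> nbrs (tri_vertices n) tri_compl_adj {p,x} \<inter> C"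
        using S CV unfolding nbrs_def adj_iff by auto
    qed
    then have a1: "a = card C - 1" using nex[OF T1] finC S0 by simp
    have cpos: "card C \<ge> 1" using finC S0 by (metis One_nat_def Suc_leI card_gt_0_iff empty_iff)
    show False
    proof (cases "\<exists>q\<in>{1..n}. q \<noteq> p \<and> q \<notin> \<Union>C")
      case True
      then obtain q where q: "q \<in> {1..n}" "q \<noteq> p" "q \<notin> \<Union>C" by auto
      have T2: "{p,q} \<in> tri_vertices n - C" using pair_tv[OF q(2)[symmetric] p(1) q(1)] p by auto
      have "nbrs (tri_vertices n) tri_compl_adj {p,q} \<inter> C = C"
        using T2 p q CV unfolding nbrs_def adj_iff by auto
      then have "a = card C" using nex[OF T2] by simp
      then show False using a1 cpos by simp
    next
      case False
      then have all: "{1..n} \<subseteq> \<Union>C \<union> {p}" by auto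
      obtain S1 where S1: "S1 \<in> C" "S1 \<noteq> S0"
      proof (cases "C = {S0}")
        case True
        then have "{1..n} \<subseteq> {x,y,p}" using all xy by auto
        then have "card {1..n} \<le> card {x,y,p}" by (intro card_mono) auto
        also have "\<dots> \<le> 3" by (simp add: card_insert_if)
        finally show ?thesis using n5 by simp
      next
        case False
        then show ?thesis using that S0 by blast
      qed
      obtain u v where uv: "S1 = {u,v}" "u \<noteq> v" using tvC[OF CV S1(1)] unfolding card_2_iff by blast
      have un: "u \<in> {1..n}" using tvC[OF CV S1(1)] uv by auto
      have d01: "S0 \<inter> S1 = {}" using clique_disj[OF cl] S0 S1 by auto
      have xu: "x \<noteq> u" using d01 xy uv by auto
      have T3V: "{x,u} \<in> tri_vertices n" using pair_tv[OF xu xn(1) un] .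
      have T3C: "{x,u} \<notin> C"
      proof
        assume h: "{x,u} \<in> C"
        have "{x,u} \<noteq> S0" using d01 xy uv by auto
        then have "{x,u} \<inter> S0 = {}" using clique_disj[OF cl] h S0 by auto
        then show False using xy by auto
      qed
      have T3: "{x,u} \<in> tri_vertices n - C" using T3V T3C by auto
      have "nbrs (tri_vertices n) tri_compl_adj {x,u} \<inter> C = C - {S0, S1}"
      proof (rule set_eqI, rule iffI)
        fix S assume "S \<in> nbrs (tri_vertices n) tri_compl_adj {x,u} \<inter> C"
        then show "S \<in> C - {S0, S1}" using xy uv unfolding nbrs_def adj_iff by auto
      next
        fix S assume S: "S \<in> C - {S0, S1}"
        have "S \<inter> S0 = {}" "S \<inter> S1 = {}" using clique_disj[OF cl] S S0 S1 by auto
        then have "S \<inter> {x,u} = {}" using xy uv by auto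
        moreover have "S \<noteq> {x,u}" using S T3C by auto
        ultimately show "S \<in> nbrs (tri_vertices n) tri_compl_adj {x,u} \<inter> C"
          using S CV unfolding nbrs_def adj_iff by auto
      qed
      then have "a = card C - 2" using nex[OF T3] finC S0 S1 by (simp add: card_Diff_subset)
      moreover have "card C \<ge> 2"
      proof -
        have "{S0,S1} \<subseteq> C" using S0 S1 by auto
        then have "card {S0,S1} \<le> card C" using finC by (intro card_mono)
        then show ?thesis using S1 by simp
      qed
      ultimately show False using a1 by simp
    qed
  qed
qed

lemma card_cov:
  assumes cl: "is_clique (tri_vertices n) tri_compl_adj C" and cov: "\<Union>C = {1..n}"
  shows "n = 2 * card C"
proof -
  have CV: "C \<subseteq> tri_vertices n" using cl unfolding is_clique_def by auto
  have pw: "pairwise disjnt C" using clique_disj[OF cl] unfolding pairwise_def disjnt_def by blast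
  have "card (\<Union>C) = sum card C"
    by (rule card_Union_disjoint[OF pw]) (use CV in \<open>auto dest!: tvC[OF CV]\<close>)
  also have "\<dots> = sum (\<lambda>_. 2) C" by (rule sum.cong) (use CV in \<open>auto dest!: tvC[OF CV]\<close>)
  finally show ?thesis using cov by simp
qed

lemma rc_params:
  assumes rc: "regular_clique (tri_vertices n) tri_compl_adj C a" and n5: "n \<ge> 5"
  shows "n = 2 * card C \<and> a = card C - 2"
proof -
  have cl: "is_clique (tri_vertices n) tri_compl_adj C" and
    nex: "\<And>v. v \<in> tri_vertices n - C \<Longrightarrow> card (nbrs (tri_vertices n) tri_compl_adj v \<inter> C) = a"
    using rc unfolding regular_clique_def by auto
  have cov: "\<Union>C = {1..n}" using cover[OF rc n5] .
  have nc: "n = 2 * card C" using card_cov[OF cl cov] .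
  have CV: "C \<subseteq> tri_vertices n" using cl unfolding is_clique_def by auto
  have finC: "finite C" using CV fin_tv finite_subset by blast
  obtain S0 where S0: "S0 \<in> C" using cl unfolding is_clique_def by auto
  have "C \<noteq> {S0}"
  proof
    assume "C = {S0}" then have "card C = 1" by simp
    then show False using nc n5 by simp
  qed
  then obtain S1 where S1: "S1 \<in> C" "S1 \<noteq> S0" using S0 by blast
  obtain x y where xy: "S0 = {x,y}" "x \<noteq> y" using tvC[OF CV S0] unfolding card_2_iff by blast
  obtain u v where uv: "S1 = {u,v}" "u \<noteq> v" using tvC[OF CV S1(1)] unfolding card_2_iff by blast
  have xn: "x \<in> {1..n}" "u \<in> {1..n}" using tvC[OF CV S0] tvC[OF CV S1(1)] xy uv by auto
  have d01: "S0 \<inter> S1 = {}" using clique_disj[OF cl] S0 S1 by auto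
  have xu: "x \<noteq> u" using d01 xy uv by auto
  have T3C: "{x,u} \<notin> C"
  proof
    assume h: "{x,u} \<in> C"
    have "{x,u} \<noteq> S0" using d01 xy uv by auto
    then have "{x,u} \<inter> S0 = {}" using clique_disj[OF cl] h S0 by auto
    then show False using xy by auto
  qed
  have T3: "{x,u} \<in> tri_vertices n - C" using pair_tv[OF xu xn] T3C by auto
  have "a = card C - 2" using nex[OF T3] pm_nexus[OF cl cov] T3 by auto
  then show ?thesis using nc by simp
qed

lemma even_rc:
  assumes "even n" "n \<ge> 1"
  shows "\<exists>C a. regular_clique (tri_vertices n) tri_compl_adj C a"
proof -
  obtain m where m: "n = 2 * m" using assms by auto
  define C where "C = (\<lambda>i. {2*i+1, 2*i+2}) ` {..<m}"
  have CV: "C \<subseteq> tri_vertices n" unfolding C_def m by (auto intro!: pair_tv)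
  have cl0: "\<forall>S\<in>C. \<forall>T\<in>C. S \<noteq> T \<longrightarrow> tri_compl_adj S T"
    unfolding C_def adj_iff by auto presburger+
  have "m \<noteq> 0" using assms m by auto
  show ?thesis
  proof (cases "m = 0")
    case True
    then show ?thesis using \<open>m \<noteq> 0\<close> by simp
  next
    case False
    then have "C \<noteq> {}" unfolding C_def by auto
    then have cl: "is_clique (tri_vertices n) tri_compl_adj C"
      unfolding is_clique_def using CV cl0 by auto
    have cov: "\<Union>C = {1..n}"
    proof
      show "\<Union>C \<subseteq> {1..n}" using CV by (auto dest!: tvC[OF CV])
    next
      show "{1..n} \<subseteq> \<Union>C"
      proof
        fix j assume j: "j \<in> {1..n}"
        define i where "i = (j - 1) div 2"
        have "i < m" using j m unfolding i_def by auto
        moreover have "j = 2*i+1 \<or> j = 2*i+2" using j unfolding i_def by auto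
        ultimately show "j \<in> \<Union>C" unfolding C_def by auto
      qed
    qed
    have "regular_clique (tri_vertices n) tri_compl_adj C (card C - 2)"
      unfolding regular_clique_def using cl pm_nexus[OF cl cov] by auto
    then show ?thesis by blast
  qed
qed

theorem lemma4p8:
  fixes n :: nat
  assumes "n \<ge> 5"
  shows "(neumaier_graph (tri_vertices n) tri_compl_adj \<longleftrightarrow> even n) \<and>
         (\<forall>k lam mu a c.
            srg_neumaier_params (tri_vertices n) tri_compl_adj (n choose 2) k lam mu a c
            \<longrightarrow> n = 2 * a + 4 \<and> c = a + 2)"
proof (rule conjI[OF iffI allI])
  assume "neumaier_graph (tri_vertices n) tri_compl_adj"
  then obtain C a where rc: "regular_clique (tri_vertices n) tri_compl_adj C a"
    unfolding neumaier_graph_def by blast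
  have "n = 2 * card C" using rc_params[OF rc assms] by simp
  then show "even n" by simp
next
  assume ev: "even n"
  have nc: "\<not> is_complete (tri_vertices n) tri_compl_adj"
  proof
    assume h: "is_complete (tri_vertices n) tri_compl_adj"
    have c1: "{1,2} \<in> tri_vertices n" using assms by (intro pair_tv) auto
    have c2: "{1,3} \<in> tri_vertices n" using assms by (intro pair_tv) auto
    have c3: "{1,2} \<noteq> ({1,3}::nat set)" by (simp add: doubleton_eq_iff)
    have "tri_compl_adj {1,2} {1,3}" using h[unfolded is_complete_def, rule_format, OF c1 c2 c3] .
    then show False unfolding adj_iff by simp
  qed
  have n1: "n \<ge> 1" using assms by simp
  obtain C a where rc: "regular_clique (tri_vertices n) tri_compl_adj C a"
    using even_rc[OF ev n1] by blast
  show "neumaier_graph (tri_vertices n) tri_compl_adj"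
    unfolding neumaier_graph_def using nc edge_reg[of n] rc by blast
next
  fix k show "\<forall>lam mu a c.
            srg_neumaier_params (tri_vertices n) tri_compl_adj (n choose 2) k lam mu a c
            \<longrightarrow> n = 2 * a + 4 \<and> c = a + 2"
  proof (intro allI impI)
  fix lam mu a c
  assume "srg_neumaier_params (tri_vertices n) tri_compl_adj (n choose 2) k lam mu a c"
  then obtain C where rc: "regular_clique (tri_vertices n) tri_compl_adj C a" and cc: "card C = c"
    unfolding srg_neumaier_params_def neumaier_params_def by blast
  have "n = 2 * card C \<and> a = card C - 2" using rc_params[OF rc assms] .
  then show "n = 2 * a + 4 \<and> c = a + 2" using assms cc by auto
  qed
qed

end
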